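(* Let $G$ be a graph with edge set $E$, let $C\subseteq E$ and let $k\ge1$ be an integer. Then $C$ is a circuit of $M_k(G)$ if and only if $\Delta G\langle C\rangle=k$ and $G\langle C\rangle$ is a cacti-graph, i.e. $G\langle C\rangle$ has no leaves and every component of $G\langle C\rangle$ has at least two cycles.
   Context: Graphs are finite, may have loops and parallel edges. A leaf is a vertex incident to exactly one edge, which is not a loop. $\Delta H=|E(H)|-|V(H)|$. For $X\subseteq E$, $G\langle X\rangle$ is the subgraph with edge set $X$ and vertex set the vertices incident to edges of $X$. A cacti-graph is a graph with no isolated vertices, no leaves, and no component that is a cycle. For an integer $k\ge0$, the $k$-circular matroid $M_k(G)$ is the matroid on $E$ whose family of circuits ${\cal C}_k(G)$ is the set of inclusion-minimal members of $\{C\subseteq E: C\neq\emptyset,\ |C|=|V(G\langle C\rangle)|+k\}$ (this family is the circuit family of a matroid). *)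

theory Defs
  imports Main
begin

text \<open>A (finite multi)graph is given by a vertex set V, an edge set E and an incidence
  map ends assigning to each edge its set of end vertices (one vertex for a loop,
  two for a non-loop edge). Parallel edges are distinct edges with equal ends.\<close>

definition graph :: "'v set \<Rightarrow> 'e set \<Rightarrow> ('e \<Rightarrow> 'v set) \<Rightarrow> bool" where
  "graph V E ends \<longleftrightarrow> finite V \<and> finite E \<and>
     (\<forall>e\<in>E. ends e \<subseteq> V \<and> 1 \<le> card (ends e) \<and> card (ends e) \<le> 2)"

definition verts :: "('e \<Rightarrow> 'v set) \<Rightarrow> 'e set \<Rightarrow> 'v set" where
  "verts ends X = \<Union> (ends ` X)"

definition Delta :: "('e \<Rightarrow> 'v set) \<Rightarrow> 'e set \<Rightarrow> int" where
  "Delta ends X = int (card X) - int (card (verts ends X))"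

definition deg :: "('e \<Rightarrow> 'v set) \<Rightarrow> 'e set \<Rightarrow> 'v \<Rightarrow> nat" where
  "deg ends X v = card {e\<in>X. v \<in> ends e \<and> card (ends e) = 2} + 2 * card {e\<in>X. ends e = {v}}"

definition is_leaf :: "('e \<Rightarrow> 'v set) \<Rightarrow> 'e set \<Rightarrow> 'v \<Rightarrow> bool" where
  "is_leaf ends X v \<longleftrightarrow> (\<exists>e\<in>X. {f\<in>X. v \<in> ends f} = {e} \<and> ends e \<noteq> {v})"

definition edge_adj :: "('e \<Rightarrow> 'v set) \<Rightarrow> 'e set \<Rightarrow> ('e \<times> 'e) set" where
  "edge_adj ends Y = {(e, f). e \<in> Y \<and> f \<in> Y \<and> ends e \<inter> ends f \<noteq> {}}"

definition connected_edges :: "('e \<Rightarrow> 'v set) \<Rightarrow> 'e set \<Rightarrow> bool" where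
  "connected_edges ends Y \<longleftrightarrow> Y \<noteq> {} \<and> (\<forall>e\<in>Y. \<forall>f\<in>Y. (e, f) \<in> (edge_adj ends Y)\<^sup>*)"

text \<open>Y is (the edge set of) a connected component of G<X> (G<X> has no isolated vertices,
  so its components are exactly the G<Y> for such Y).\<close>
definition is_component :: "('e \<Rightarrow> 'v set) \<Rightarrow> 'e set \<Rightarrow> 'e set \<Rightarrow> bool" where
  "is_component ends X Y \<longleftrightarrow> Y \<subseteq> X \<and> connected_edges ends Y \<and>
     (\<forall>e\<in>X - Y. ends e \<inter> verts ends Y = {})"

text \<open>G<Y> is a cycle: connected and every vertex has degree 2 (loops and pairs of parallel
  edges are cycles of length 1 and 2).\<close>
definition is_cycle :: "('e \<Rightarrow> 'v set) \<Rightarrow> 'e set \<Rightarrow> bool" where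
  "is_cycle ends Y \<longleftrightarrow> connected_edges ends Y \<and> (\<forall>v\<in>verts ends Y. deg ends Y v = 2)"

definition cacti_graph :: "('e \<Rightarrow> 'v set) \<Rightarrow> 'e set \<Rightarrow> bool" where
  "cacti_graph ends X \<longleftrightarrow>
     (\<forall>v\<in>verts ends X. deg ends X v \<noteq> 0) \<and>
     (\<forall>v\<in>verts ends X. \<not> is_leaf ends X v) \<and>
     (\<forall>Y. is_component ends X Y \<longrightarrow> \<not> is_cycle ends Y)"

definition k_dependent :: "'e set \<Rightarrow> ('e \<Rightarrow> 'v set) \<Rightarrow> nat \<Rightarrow> 'e set \<Rightarrow> bool" where
  "k_dependent E ends k C \<longleftrightarrow> C \<subseteq> E \<and> C \<noteq> {} \<and> card C = card (verts ends C) + k"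

definition k_circuit :: "'v set \<Rightarrow> 'e set \<Rightarrow> ('e \<Rightarrow> 'v set) \<Rightarrow> nat \<Rightarrow> 'e set \<Rightarrow> bool" where
  "k_circuit V E ends k C \<longleftrightarrow> k_dependent E ends k C \<and>
     (\<forall>D. D \<subset> C \<longrightarrow> \<not> k_dependent E ends k D)"

end

theory Submission imports Defs begin

definition good :: "('e \<Rightarrow> 'v set) \<Rightarrow> 'e set \<Rightarrow> bool" where
  "good ends X \<longleftrightarrow> finite X \<and> (\<forall>e\<in>X. 1 \<le> card (ends e) \<and> card (ends e) \<le> 2)"

lemma good_subset: "good ends X \<Longrightarrow> Y \<subseteq> X \<Longrightarrow> good ends Y"
proof -
  assume "good ends X" "Y \<subseteq> X"
  then show ?thesis unfolding good_def using finite_subset[of Y X] by blast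
qed

lemma good_card: "good ends X \<Longrightarrow> e \<in> X \<Longrightarrow> card (ends e) = 1 \<or> card (ends e) = 2"
proof -
  assume "good ends X" "e \<in> X"
  then have "1 \<le> card (ends e)" "card (ends e) \<le> 2" unfolding good_def by auto
  then show ?thesis by linarith
qed

lemma card1_sing: "card A = 1 \<Longrightarrow> v \<in> A \<Longrightarrow> A = {v}"
proof -
  assume c: "card A = 1" and v: "v \<in> A"
  from c have "\<exists>x. A = {x}" by (simp add: card_1_singleton_iff)
  then obtain x where "A = {x}" by blast
  then show ?thesis using v by simp
qed

lemma good_fin_ends: "good ends X \<Longrightarrow> e \<in> X \<Longrightarrow> finite (ends e) \<and> ends e \<noteq> {}"
proof -
  assume "good ends X" "e \<in> X"
  then have "card (ends e) \<ge> 1" unfolding good_def by simp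
  then have "card (ends e) \<noteq> 0" by simp
  moreover have "finite (ends e)"
  proof (rule ccontr)
    assume "\<not> finite (ends e)"
    then have "card (ends e) = 0" by simp
    then show False using \<open>card (ends e) \<noteq> 0\<close> by simp
  qed
  moreover have "ends e \<noteq> {}"
  proof
    assume "ends e = {}"
    then show False using \<open>card (ends e) \<noteq> 0\<close> by simp
  qed
  ultimately show ?thesis by simp
qed

lemma finite_verts: "good ends X \<Longrightarrow> finite (verts ends X)"
proof -
  assume g: "good ends X"
  have "finite X" using g unfolding good_def by simp
  moreover have "\<forall>e\<in>X. finite (ends e)" using good_fin_ends[OF g] by simp
  ultimately show ?thesis unfolding verts_def by simp
qed

lemma verts_mono: "Y \<subseteq> X \<Longrightarrow> verts ends Y \<subseteq> verts ends X"
  unfolding verts_def by auto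

lemma verts_Un: "verts ends (A \<union> B) = verts ends A \<union> verts ends B"
  unfolding verts_def by auto

lemma Delta_split:
  assumes "good ends (A \<union> B)" "A \<inter> B = {}" "verts ends A \<inter> verts ends B = {}"
  shows "Delta ends (A \<union> B) = Delta ends A + Delta ends B"
proof -
  have fA: "finite A" "finite B" using assms(1) unfolding good_def by auto
  have fv: "finite (verts ends A)" "finite (verts ends B)"
    using finite_verts[OF good_subset[OF assms(1)]] by auto
  show ?thesis unfolding Delta_def verts_Un
    using card_Un_disjoint[OF fA assms(2)] card_Un_disjoint[OF fv assms(3)] by simp
qed

lemma Delta_remove:
  assumes "good ends X" "e \<in> X"
  shows "Delta ends (X - {e}) \<ge> Delta ends X - 1"
proof -
  have "card (verts ends (X - {e})) \<le> card (verts ends X)"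
    by (rule card_mono[OF finite_verts[OF assms(1)] verts_mono]) auto
  moreover have "card (X - {e}) = card X - 1" using assms unfolding good_def by simp
  moreover have "card X \<ge> 1"
  proof -
    have "finite X" using assms unfolding good_def by simp
    then have "card X > 0" using assms(2) card_gt_0_iff by blast
    then show ?thesis by simp
  qed
  ultimately show ?thesis unfolding Delta_def by linarith
qed

lemma Delta_single:
  assumes "good ends X" "e \<in> X" shows "Delta ends {e} \<le> 0"
proof -
  have "card (ends e) \<ge> 1" using assms unfolding good_def by simp
  then show ?thesis unfolding Delta_def verts_def by simp
qed

lemma Delta_empty: "Delta ends {} = 0"
  unfolding Delta_def verts_def by simp

lemma intermediate:
  assumes "good ends D" "D \<noteq> {}" "Delta ends D \<ge> j" "j \<ge> 1"
  shows "\<exists>D'\<subseteq>D. D' \<noteq> {} \<and> Delta ends D' = j"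
  using assms
proof (induction "card D" arbitrary: D rule: less_induct)
  case less
  show ?case
  proof (cases "Delta ends D = j")
    case True then show ?thesis using less.prems by blast
  next
    case False
    obtain e where e: "e \<in> D" using less.prems by blast
    have "D \<noteq> {e}" using Delta_single[OF less.prems(1) e] less.prems False by auto
    then have ne: "D - {e} \<noteq> {}" using e by auto
    have fD: "finite D" using less.prems unfolding good_def by auto
    have "Delta ends (D - {e}) \<ge> j" using Delta_remove[OF less.prems(1) e] less.prems False by linarith
    moreover have "card (D - {e}) < card D" using fD e by (rule card_Diff1_less)
    ultimately obtain D' where "D' \<subseteq> D - {e}" "D' \<noteq> {}" "Delta ends D' = j"
      using less(1)[of "D - {e}", OF _ good_subset[OF less.prems(1)] ne _ less.prems(4)] by blast
    then show ?thesis by blast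
  qed
qed


definition wt :: "('e \<Rightarrow> 'v set) \<Rightarrow> 'v \<Rightarrow> 'e \<Rightarrow> nat" where
  "wt ends v e = (if v \<in> ends e \<and> card (ends e) = 2 then 1 else 0) + (if ends e = {v} then 2 else 0)"

lemma card_filter_sum: "finite X \<Longrightarrow> card {e\<in>X. P e} = (\<Sum>e\<in>X. if P e then 1 else 0)"
proof -
  assume "finite X"
  have "{e\<in>X. P e} = X \<inter> Collect P" by auto
  then show ?thesis using \<open>finite X\<close> by (simp add: sum.If_cases)
qed

lemma deg_sum: "finite X \<Longrightarrow> deg ends X v = (\<Sum>e\<in>X. wt ends v e)"
proof -
  assume f: "finite X"
  have "deg ends X v = (\<Sum>e\<in>X. if v \<in> ends e \<and> card (ends e) = 2 then 1 else 0)
       + 2 * (\<Sum>e\<in>X. if ends e = {v} then 1 else 0)"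
    unfolding deg_def card_filter_sum[OF f] by simp
  also have "\<dots> = (\<Sum>e\<in>X. (if v \<in> ends e \<and> card (ends e) = 2 then 1 else 0)
       + 2 * (if ends e = {v} then 1 else 0))"
    by (simp add: sum.distrib sum_distrib_left)
  also have "\<dots> = (\<Sum>e\<in>X. wt ends v e)"
    by (rule sum.cong) (auto simp: wt_def)
  finally show ?thesis .
qed

lemma wt_sum_edge:
  assumes "good ends X" "e \<in> X"
  shows "(\<Sum>v\<in>verts ends X. wt ends v e) = 2"
proof -
  have sub: "ends e \<subseteq> verts ends X" using assms(2) unfolding verts_def by auto
  have fe: "finite (ends e)" using good_fin_ends[OF assms] by simp
  have "(\<Sum>v\<in>verts ends X. wt ends v e) = (\<Sum>v\<in>ends e. wt ends v e)"
    by (rule sum.mono_neutral_right[OF finite_verts[OF assms(1)] sub]) (auto simp: wt_def)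
  also have "\<dots> = 2"
  proof -
    have c: "card (ends e) = 1 \<or> card (ends e) = 2" using good_card[OF assms] .
    then show ?thesis
    proof
      assume "card (ends e) = 1"
      then have "\<exists>a. ends e = {a}" by (simp add: card_1_singleton_iff)
      then obtain a where "ends e = {a}" by blast
      then show ?thesis by (simp add: wt_def)
    next
      assume c2: "card (ends e) = 2"
      have "\<forall>v\<in>ends e. wt ends v e = 1" using c2 by (auto simp: wt_def)
      then have "(\<Sum>v\<in>ends e. wt ends v e) = (\<Sum>v\<in>ends e. 1)" by simp
      then show ?thesis using c2 by simp
    qed
  qed
  finally show ?thesis .
qed

lemma deg_sum_total:
  assumes "good ends X"
  shows "(\<Sum>v\<in>verts ends X. deg ends X v) = 2 * card X"
proof -
  have fX: "finite X" using assms unfolding good_def by auto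
  have "(\<Sum>v\<in>verts ends X. deg ends X v) = (\<Sum>v\<in>verts ends X. \<Sum>e\<in>X. wt ends v e)"
    by (rule sum.cong) (simp_all add: deg_sum[OF fX])
  also have "\<dots> = (\<Sum>e\<in>X. \<Sum>v\<in>verts ends X. wt ends v e)" by (rule sum.swap)
  also have "\<dots> = (\<Sum>e\<in>X. 2)" using wt_sum_edge[OF assms] by simp
  finally show ?thesis by simp
qed

lemma deg_pos:
  assumes "good ends X" "v \<in> verts ends X" shows "deg ends X v \<ge> 1"
proof -
  obtain e where e: "e \<in> X" "v \<in> ends e" using assms(2) unfolding verts_def by auto
  have fX: "finite X" using assms unfolding good_def by auto
  have "wt ends v e \<ge> 1"
  proof -
    have c: "card (ends e) = 1 \<or> card (ends e) = 2" using good_card[OF assms(1) e(1)] .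
    then show ?thesis
    proof
      assume "card (ends e) = 1"
      then have "ends e = {v}" by (rule card1_sing[OF _ e(2)])
      then show ?thesis by (simp add: wt_def)
    next
      assume "card (ends e) = 2"
      then show ?thesis using e(2) by (simp add: wt_def)
    qed
  qed
  moreover have "wt ends v e \<le> (\<Sum>e\<in>X. wt ends v e)"
    by (rule member_le_sum[OF e(1)]) (auto simp: fX)
  ultimately show ?thesis by (simp add: deg_sum[OF fX])
qed

lemma deg1_leaf:
  assumes "good ends X" "deg ends X v = 1" shows "is_leaf ends X v"
proof -
  have fX: "finite X" using assms unfolding good_def by auto
  let ?A = "{e\<in>X. v \<in> ends e \<and> card (ends e) = 2}"
  let ?B = "{e\<in>X. ends e = {v}}"
  have "card ?A + 2 * card ?B = 1" using assms(2) unfolding deg_def .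
  then have cA: "card ?A = 1" and cB: "card ?B = 0" by presburger+
  from cA have "\<exists>e. ?A = {e}" by (simp add: card_1_singleton_iff)
  then obtain e where eA: "?A = {e}" by blast
  have "?B = {}" using cB fX by simp
  have "{f\<in>X. v \<in> ends f} = {e}"
  proof
    show "{f\<in>X. v \<in> ends f} \<subseteq> {e}"
    proof
      fix f assume f: "f \<in> {f\<in>X. v \<in> ends f}"
      have c: "card (ends f) = 1 \<or> card (ends f) = 2" proof -
        have "f \<in> X" using f by simp
        then show ?thesis by (rule good_card[OF assms(1)])
      qed
      show "f \<in> {e}"
      proof (cases "card (ends f) = 2")
        case True then show ?thesis using f eA by blast
      next
        case False
        then have "card (ends f) = 1" using c by simp
        moreover have "v \<in> ends f" using f by simp
        ultimately have "ends f = {v}" by (rule card1_sing)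
        then show ?thesis using f \<open>?B = {}\<close> by blast
      qed
    qed
  next
    show "{e} \<subseteq> {f\<in>X. v \<in> ends f}" using eA by blast
  qed
  moreover have "ends e \<noteq> {v}"
  proof -
    have "e \<in> ?A" using eA by blast
    then have "card (ends e) = 2" by simp
    then show ?thesis by auto
  qed
  ultimately show ?thesis unfolding is_leaf_def using eA by blast
qed

lemma noleaf_deg2:
  assumes "good ends X" "v \<in> verts ends X" "\<not> is_leaf ends X v" shows "deg ends X v \<ge> 2"
proof (rule ccontr)
  assume "\<not> 2 \<le> deg ends X v"
  moreover have "1 \<le> deg ends X v" using deg_pos[OF assms(1,2)] .
  ultimately have "deg ends X v = 1" by simp
  then show False using deg1_leaf[OF assms(1)] assms(3) by blast
qed

lemma deg_eq:
  assumes "Z \<subseteq> Y" "\<forall>g\<in>Y. v \<in> ends g \<longrightarrow> g \<in> Z"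
  shows "deg ends Z v = deg ends Y v"
proof -
  have "{e\<in>Z. v \<in> ends e \<and> card (ends e) = 2} = {e\<in>Y. v \<in> ends e \<and> card (ends e) = 2}"
       "{e\<in>Z. ends e = {v}} = {e\<in>Y. ends e = {v}}" using assms by auto
  then show ?thesis unfolding deg_def by simp
qed


lemma edge_adj_sym: "(edge_adj ends F)\<inverse> = edge_adj ends F"
  unfolding edge_adj_def by auto

lemma rtrancl_sym_adj: "(x, y) \<in> (edge_adj ends F)\<^sup>* \<Longrightarrow> (y, x) \<in> (edge_adj ends F)\<^sup>*"
  by (metis edge_adj_sym rtrancl_converseI)

lemma class_props:
  assumes "A = {g\<in>F. (e, g) \<in> (edge_adj ends F)\<^sup>*}" "e \<in> F"
  shows "A \<subseteq> F" "e \<in> A" "connected_edges ends A" "\<forall>g\<in>F - A. ends g \<inter> verts ends A = {}"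
proof -
  show "A \<subseteq> F" using assms by auto
  show eA: "e \<in> A" using assms by auto
  show disj: "\<forall>g\<in>F - A. ends g \<inter> verts ends A = {}"
  proof (intro ballI equalityI subsetI)
    fix g v assume g: "g \<in> F - A" and v: "v \<in> ends g \<inter> verts ends A"
    then obtain h where h: "h \<in> A" "v \<in> ends h" unfolding verts_def by auto
    then have "(h, g) \<in> edge_adj ends F" using g v assms(1) unfolding edge_adj_def by auto
    then have "(e, g) \<in> (edge_adj ends F)\<^sup>*" using h assms(1) by auto
    then show "v \<in> {}" using g assms(1) by auto
  qed simp
  have reach: "(e, g) \<in> (edge_adj ends A)\<^sup>*" if "g \<in> A" for g
  proof -
    have "(e, g) \<in> (edge_adj ends F)\<^sup>*" using that assms(1) by auto
    then show ?thesis
    proof (induction rule: rtrancl_induct)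
      case base then show ?case by simp
    next
      case (step y z)
      have yF: "y \<in> F" "z \<in> F" using step(2) unfolding edge_adj_def by auto
      have "y \<in> A" "z \<in> A" using step(1,2) yF assms(1) by auto
      then have "(y, z) \<in> edge_adj ends A" using step(2) unfolding edge_adj_def by auto
      then show ?case by (rule rtrancl_into_rtrancl[OF step(3)])
    qed
  qed
  show "connected_edges ends A" unfolding connected_edges_def
  proof (intro conjI ballI)
    show "A \<noteq> {}" using eA by auto
    fix g h assume "g \<in> A" "h \<in> A"
    then show "(g, h) \<in> (edge_adj ends A)\<^sup>*"
      using reach rtrancl_sym_adj by (metis rtrancl_trans)
  qed
qed

lemma cycle_Delta:
  assumes "good ends Y" "is_cycle ends Y" shows "Delta ends Y = 0"
proof -
  have "(\<Sum>v\<in>verts ends Y. deg ends Y v) = (\<Sum>v\<in>verts ends Y. 2)"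
    using assms(2) unfolding is_cycle_def by simp
  then have "2 * card Y = 2 * card (verts ends Y)" using deg_sum_total[OF assms(1)] by simp
  then show ?thesis unfolding Delta_def by simp
qed

lemma deg_eq_conv:
  assumes "good ends Y" "Z \<subseteq> Y" "deg ends Z v = deg ends Y v" "g \<in> Y" "v \<in> ends g"
  shows "g \<in> Z"
proof -
  have fY: "finite Y" using assms unfolding good_def by auto
  let ?AZ = "{e\<in>Z. v \<in> ends e \<and> card (ends e) = 2}" and ?AY = "{e\<in>Y. v \<in> ends e \<and> card (ends e) = 2}"
  let ?BZ = "{e\<in>Z. ends e = {v}}" and ?BY = "{e\<in>Y. ends e = {v}}"
  have s1: "?AZ \<subseteq> ?AY" "?BZ \<subseteq> ?BY" using assms(2) by auto
  have f1: "finite ?AY" "finite ?BY" using fY by auto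
  have le: "card ?AZ \<le> card ?AY" "card ?BZ \<le> card ?BY" using card_mono[OF f1(1) s1(1)] card_mono[OF f1(2) s1(2)] by auto
  have "card ?AZ + 2 * card ?BZ = card ?AY + 2 * card ?BY" using assms(3) unfolding deg_def .
  then have ca: "card ?AZ = card ?AY" and cb: "card ?BZ = card ?BY" using le by linarith+
  have eqs: "?AZ = ?AY" "?BZ = ?BY"
    using card_subset_eq[OF f1(1) s1(1) ca] card_subset_eq[OF f1(2) s1(2) cb] by auto
  have c: "card (ends g) = 1 \<or> card (ends g) = 2" using good_card[OF assms(1,4)] .
  then show ?thesis
  proof
    assume "card (ends g) = 1"
    then have "ends g = {v}" by (rule card1_sing[OF _ assms(5)])
    then have "g \<in> ?BY" using assms(4) by auto
    then show ?thesis using eqs by auto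
  next
    assume "card (ends g) = 2"
    then have "g \<in> ?AY" using assms(4,5) by auto
    then show ?thesis using eqs by auto
  qed
qed

lemma sub_cycle:
  assumes "good ends Y" "Z \<subseteq> Y" "is_cycle ends Z" "is_cycle ends Y"
  shows "Z = Y"
proof -
  obtain z where z: "z \<in> Z" using assms(3) unfolding is_cycle_def connected_edges_def by auto
  have "g \<in> Z" if g: "g \<in> Y" for g
  proof -
    have "(z, g) \<in> (edge_adj ends Y)\<^sup>*" using assms(4) z g assms(2)
      unfolding is_cycle_def connected_edges_def by auto
    then show ?thesis
    proof (induction rule: rtrancl_induct)
      case base then show ?case using z by simp
    next
      case (step y w)
      then obtain v where v: "v \<in> ends y" "v \<in> ends w" "w \<in> Y" unfolding edge_adj_def by auto
      have vZ: "v \<in> verts ends Z" using v step(3) unfolding verts_def by auto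
      have vY: "v \<in> verts ends Y" using vZ verts_mono[OF assms(2), of ends] by auto
      have "deg ends Z v = deg ends Y v" using assms(3,4) vZ vY unfolding is_cycle_def by simp
      then show ?case using deg_eq_conv[OF assms(1,2)] v by blast
    qed
  qed
  then show ?thesis using assms(2) by auto
qed


lemma leaf_remove:
  assumes "good ends F" "is_leaf ends F v"
  obtains e where "e \<in> F" "ends e \<noteq> {v}" "v \<in> ends e"
    "Delta ends (F - {e}) \<ge> Delta ends F"
proof -
  obtain e where e: "e \<in> F" "{f\<in>F. v \<in> ends f} = {e}" "ends e \<noteq> {v}"
    using assms(2) unfolding is_leaf_def by auto
  have ve: "v \<in> ends e" using e(2) by auto
  have fF: "finite F" using assms unfolding good_def by auto
  have sub: "verts ends (F - {e}) \<subseteq> verts ends F - {v}"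
    using e(2) unfolding verts_def by auto
  have vF: "v \<in> verts ends F" using ve e(1) unfolding verts_def by auto
  have "card (verts ends (F - {e})) \<le> card (verts ends F - {v})"
    by (rule card_mono) (use finite_verts[OF assms(1)] sub in auto)
  also have "\<dots> = card (verts ends F) - 1" using vF finite_verts[OF assms(1)] by simp
  finally have c1: "card (verts ends (F - {e})) \<le> card (verts ends F) - 1" .
  have c2: "card (F - {e}) = card F - 1" using e(1) fF by simp
  have "card F \<ge> 1" "card (verts ends F) \<ge> 1" using e(1) fF vF finite_verts[OF assms(1)]
    by (auto simp: Suc_le_eq card_gt_0_iff)
  then have "Delta ends (F - {e}) \<ge> Delta ends F" using c1 c2 unfolding Delta_def by linarith
  then show ?thesis using that e ve by blast
qed

lemma cycle_exists:
  assumes "good ends F" "F \<noteq> {}" "Delta ends F \<ge> 0"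
  shows "\<exists>Z\<subseteq>F. is_cycle ends Z"
  using assms
proof (induction "card F" arbitrary: F rule: less_induct)
  case less
  have fF: "finite F" using less.prems unfolding good_def by auto
  show ?case
  proof (cases "\<exists>G\<subset>F. G \<noteq> {} \<and> Delta ends G \<ge> 0")
    case True
    then obtain G where G: "G \<subset> F" "G \<noteq> {}" "Delta ends G \<ge> 0" by blast
    have "card G < card F" using psubset_card_mono[OF fF G(1)] .
    then obtain Z where "Z \<subseteq> G" "is_cycle ends Z"
      using less(1)[of G, OF _ good_subset[OF less.prems(1)] G(2) G(3)] G(1) by blast
    then show ?thesis using G by blast
  next
    case False
    have min: "Delta ends G < 0" if "G \<subset> F" "G \<noteq> {}" for G
      using False that by (meson not_le)
    obtain e where e: "e \<in> F" using less.prems by blast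
    have D0: "Delta ends F = 0"
    proof (rule ccontr)
      assume "Delta ends F \<noteq> 0"
      then have pos: "Delta ends F \<ge> 1" using less.prems by linarith
      have "F \<noteq> {e}" using Delta_single[OF less.prems(1) e] pos by auto
      then have "F - {e} \<noteq> {}" "F - {e} \<subset> F" using e by auto
      then have "Delta ends (F - {e}) < 0" using min by blast
      then show False using Delta_remove[OF less.prems(1) e] pos by linarith
    qed
    define A where "A = {g\<in>F. (e, g) \<in> (edge_adj ends F)\<^sup>*}"
    note cp = class_props[OF A_def e]
    have AF: "A = F"
    proof (rule ccontr)
      assume ne: "A \<noteq> F"
      let ?B = "F - A"
      have "?B \<noteq> {}" using ne cp(1) by auto
      moreover have "A \<noteq> {}" using cp(2) by auto
      ultimately have neg: "Delta ends A < 0" "Delta ends ?B < 0"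
        using min[of A] min[of ?B] cp(1) ne by auto
      have U: "A \<union> ?B = F" using cp(1) by auto
      have "verts ends A \<inter> verts ends ?B = {}" using cp(4) unfolding verts_def by auto
      then have "Delta ends F = Delta ends A + Delta ends ?B"
        using Delta_split[of ends A ?B] U less.prems(1) by auto
      then show False using neg D0 by linarith
    qed
    have deg2: "deg ends F v \<ge> 2" if v: "v \<in> verts ends F" for v
    proof (rule ccontr)
      assume "\<not> 2 \<le> deg ends F v"
      then have "is_leaf ends F v" using noleaf_deg2[OF less.prems(1) v] by blast
      then obtain f where f: "f \<in> F" "ends f \<noteq> {v}" "v \<in> ends f"
        "Delta ends (F - {f}) \<ge> Delta ends F" using leaf_remove[OF less.prems(1)] by blast
      have "F \<noteq> {f}"
      proof
        assume "F = {f}"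
        then have "card (ends f) = 1" using D0 unfolding Delta_def verts_def by simp
        then have "ends f = {v}" by (rule card1_sing[OF _ f(3)])
        then show False using f(2) by simp
      qed
      then have "F - {f} \<noteq> {}" "F - {f} \<subset> F" using f by auto
      then have "Delta ends (F - {f}) < 0" by (rule min[rotated])
      then show False using f(4) D0 by simp
    qed
    have alleq: "deg ends F v = 2" if v: "v \<in> verts ends F" for v
    proof (rule ccontr)
      assume "deg ends F v \<noteq> 2"
      then have "2 < deg ends F v" using deg2[OF v] by simp
      then have "(\<Sum>v\<in>verts ends F. 2) < (\<Sum>v\<in>verts ends F. deg ends F v)"
        using sum_strict_mono_ex1[OF finite_verts[OF less.prems(1)], of "\<lambda>_. 2" "deg ends F"] deg2 v by blast
      then have "2 * card (verts ends F) < 2 * card F" using deg_sum_total[OF less.prems(1)] by simp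
      then show False using D0 unfolding Delta_def by simp
    qed
    have "is_cycle ends F" unfolding is_cycle_def using cp(3) AF alleq by simp
    then show ?thesis by blast
  qed
qed


lemma strict_dec:
  assumes g: "good ends X" and nl: "\<forall>v\<in>verts ends X. \<not> is_leaf ends X v"
    and nc: "\<forall>Y. is_component ends X Y \<longrightarrow> \<not> is_cycle ends Y" and D: "D \<subset> X"
  shows "Delta ends D < Delta ends X"
proof -
  define F where "F = X - D"
  define W where "W = verts ends X - verts ends D"
  have fX: "finite X" using g unfolding good_def by auto
  have gF: "good ends F" using good_subset[OF g] F_def by auto
  have Fne: "F \<noteq> {}" using D F_def by auto
  have fV: "finite (verts ends X)" using finite_verts[OF g] .
  have vD: "verts ends D \<subseteq> verts ends X" by (rule verts_mono) (use D in blast)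
  have DX: "D \<subseteq> X" using D by auto
  have fD: "finite D" using finite_subset[OF DX fX] .
  have "card F = card X - card D" unfolding F_def by (rule card_Diff_subset[OF fD DX])
  moreover have "card D \<le> card X" by (rule card_mono[OF fX DX])
  ultimately have cX: "card X = card D + card F" by arith
  have fvD: "finite (verts ends D)" using finite_subset[OF vD fV] .
  have "card W = card (verts ends X) - card (verts ends D)" unfolding W_def by (rule card_Diff_subset[OF fvD vD])
  moreover have "card (verts ends D) \<le> card (verts ends X)" by (rule card_mono[OF fV vD])
  ultimately have cV: "card (verts ends X) = card (verts ends D) + card W" by arith
  have atW: "\<forall>g\<in>X. w \<in> ends g \<longrightarrow> g \<in> F" if "w \<in> W" for w
    using that unfolding W_def F_def verts_def by auto
  have degW: "deg ends F w = deg ends X w" if "w \<in> W" for w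
    using deg_eq[of F X w ends] atW[OF that] F_def by auto
  have WF: "W \<subseteq> verts ends F"
  proof
    fix w assume w: "w \<in> W"
    then obtain g where "g \<in> X" "w \<in> ends g" unfolding W_def verts_def by auto
    then show "w \<in> verts ends F" using atW[OF w] unfolding verts_def by auto
  qed
  have fVF: "finite (verts ends F)" using finite_verts[OF gF] .
  have fW: "finite W" using WF fVF finite_subset by auto
  have dW2: "deg ends F w \<ge> 2" if "w \<in> W" for w
    using noleaf_deg2[OF g, of w] nl that degW[OF that] unfolding W_def by auto
  have s1: "(\<Sum>w\<in>W. 2) \<le> (\<Sum>w\<in>W. deg ends F w)" using dW2 by (rule sum_mono)
  have s2: "(\<Sum>w\<in>W. deg ends F w) \<le> (\<Sum>w\<in>verts ends F. deg ends F w)"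
    by (rule sum_mono2[OF fVF WF]) simp
  have tot: "(\<Sum>w\<in>verts ends F. deg ends F w) = 2 * card F" using deg_sum_total[OF gF] .
  have le: "card W \<le> card F" using s1 s2 tot by simp
  have "card W < card F"
  proof (rule ccontr)
    assume "\<not> card W < card F"
    then have eqc: "card W = card F" using le by simp
    have VW: "verts ends F = W"
    proof (rule ccontr)
      assume "verts ends F \<noteq> W"
      then obtain u where u: "u \<in> verts ends F" "u \<notin> W" using WF by auto
      have "(\<Sum>w\<in>verts ends F. deg ends F w) = (\<Sum>w\<in>W. deg ends F w) + (\<Sum>w\<in>verts ends F - W. deg ends F w)"
        using sum.subset_diff[OF WF fVF, of "deg ends F"] by linarith
      moreover have "deg ends F u \<le> (\<Sum>w\<in>verts ends F - W. deg ends F w)"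
        by (rule member_le_sum) (use u fVF in auto)
      moreover have "deg ends F u \<ge> 1" using deg_pos[OF gF u(1)] .
      ultimately show False using s1 tot eqc by simp
    qed
    have d2: "deg ends F w = 2" if w: "w \<in> W" for w
    proof (rule ccontr)
      assume "deg ends F w \<noteq> 2"
      then have "2 < deg ends F w" using dW2[OF w] by simp
      then have "(\<Sum>v\<in>W. 2) < (\<Sum>v\<in>W. deg ends F v)"
        using sum_strict_mono_ex1[OF fW, of "\<lambda>_. 2" "deg ends F"] dW2 w by blast
      then show False using s2 tot eqc by simp
    qed
    obtain e where e: "e \<in> F" using Fne by auto
    define A where "A = {g\<in>F. (e, g) \<in> (edge_adj ends F)\<^sup>*}"
    note cp = class_props[OF A_def e]
    have vAW: "verts ends A \<subseteq> W" using verts_mono[OF cp(1), of ends] VW by auto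
    have comp: "is_component ends X A" unfolding is_component_def
    proof (intro conjI ballI)
      show "A \<subseteq> X" using cp(1) F_def by auto
      show "connected_edges ends A" using cp(3) .
      fix g assume g: "g \<in> X - A"
      show "ends g \<inter> verts ends A = {}"
      proof (cases "g \<in> F")
        case True then show ?thesis using cp(4) g by auto
      next
        case False
        then have "g \<in> D" using g F_def by auto
        then have "ends g \<subseteq> verts ends D" unfolding verts_def by auto
        then show ?thesis using vAW unfolding W_def by auto
      qed
    qed
    have "is_cycle ends A" unfolding is_cycle_def
    proof (intro conjI ballI)
      show "connected_edges ends A" using cp(3) .
      fix v assume v: "v \<in> verts ends A"
      have "deg ends A v = deg ends F v"
      proof (rule deg_eq[OF cp(1)], intro ballI impI)
        fix g assume "g \<in> F" "v \<in> ends g"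
        then show "g \<in> A" using cp(4) v by auto
      qed
      then show "deg ends A v = 2" using d2 vAW v by auto
    qed
    then show False using nc comp by blast
  qed
  then show ?thesis unfolding Delta_def using cX cV by linarith
qed


lemma kdep_iff: "k_dependent E ends k D \<longleftrightarrow> D \<subseteq> E \<and> D \<noteq> {} \<and> Delta ends D = int k"
  unfolding k_dependent_def Delta_def by auto

lemma claimA:
  assumes g: "good ends C" "C \<subseteq> E" "k \<ge> 1"
  shows "k_circuit V E ends k C \<longleftrightarrow> Delta ends C = int k \<and> (\<forall>D. D \<subset> C \<longrightarrow> Delta ends D < int k)"
proof
  assume kc: "k_circuit V E ends k C"
  then have "k_dependent E ends k C" unfolding k_circuit_def by blast
  then have d: "Delta ends C = int k" "C \<noteq> {}" unfolding kdep_iff by blast+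
  have "Delta ends D < int k" if D: "D \<subset> C" for D
  proof (rule ccontr)
    assume "\<not> Delta ends D < int k"
    then have ge: "Delta ends D \<ge> int k" by simp
    have Dne: "D \<noteq> {}"
    proof
      assume "D = {}"
      then have "Delta ends D = 0" using Delta_empty by simp
      then show False using ge assms(3) by simp
    qed
    have gD: "good ends D" using good_subset[OF g(1)] D by auto
    have k1: "int k \<ge> 1" using assms(3) by simp
    obtain D' where D': "D' \<subseteq> D" "D' \<noteq> {}" "Delta ends D' = int k"
      using intermediate[OF gD Dne ge k1] by blast
    have "D' \<subseteq> E" using D'(1) D assms(2) by blast
    then have "k_dependent E ends k D'" using D'(2,3) unfolding kdep_iff by blast
    moreover have "D' \<subset> C" using D'(1) D by blast
    moreover have "\<forall>D. D \<subset> C \<longrightarrow> \<not> k_dependent E ends k D" using kc unfolding k_circuit_def by blast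
    ultimately show False by blast
  qed
  then show "Delta ends C = int k \<and> (\<forall>D. D \<subset> C \<longrightarrow> Delta ends D < int k)" using d(1) by blast
next
  assume P: "Delta ends C = int k \<and> (\<forall>D. D \<subset> C \<longrightarrow> Delta ends D < int k)"
  have "C \<noteq> {}"
  proof
    assume "C = {}"
    then have "Delta ends C = 0" using Delta_empty by simp
    then show False using P assms(3) by simp
  qed
  then have "k_dependent E ends k C" unfolding kdep_iff using P assms(2) by blast
  moreover have "\<forall>D. D \<subset> C \<longrightarrow> \<not> k_dependent E ends k D"
  proof (intro allI impI notI)
    fix D assume "D \<subset> C" "k_dependent E ends k D"
    then have "Delta ends D = int k" "Delta ends D < int k" using P unfolding kdep_iff by blast+
    then show False by simp
  qed
  ultimately show "k_circuit V E ends k C" unfolding k_circuit_def by blast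
qed

lemma cacti_intro:
  assumes g: "good ends C" and nl: "\<forall>v\<in>verts ends C. \<not> is_leaf ends C v"
    and nc: "\<And>Y. is_component ends C Y \<Longrightarrow> \<not> is_cycle ends Y"
  shows "cacti_graph ends C"
proof -
  have d: "\<forall>v\<in>verts ends C. deg ends C v \<noteq> 0"
  proof
    fix v assume "v \<in> verts ends C"
    then have "deg ends C v \<ge> 1" by (rule deg_pos[OF g])
    then show "deg ends C v \<noteq> 0" by simp
  qed
  have c: "\<forall>Y. is_component ends C Y \<longrightarrow> \<not> is_cycle ends Y" using nc by blast
  show ?thesis unfolding cacti_graph_def using d nl c by blast
qed

lemma comp_split:
  assumes g: "good ends C" and Y: "is_component ends C Y"
  shows "Delta ends C = Delta ends Y + Delta ends (C - Y)" "Y \<subseteq> C" "Y \<noteq> {}" "C - Y \<subset> C"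
proof -
  show YC: "Y \<subseteq> C" using Y unfolding is_component_def by blast
  show Yne: "Y \<noteq> {}" using Y unfolding is_component_def connected_edges_def by blast
  show "C - Y \<subset> C" using Yne YC by blast
  have "verts ends Y \<inter> verts ends (C - Y) = {}"
    using Y unfolding is_component_def verts_def by blast
  moreover have U: "Y \<union> (C - Y) = C" using YC by blast
  moreover have "Y \<inter> (C - Y) = {}" by blast
  moreover have "good ends (Y \<union> (C - Y))" using g U by simp
  ultimately show "Delta ends C = Delta ends Y + Delta ends (C - Y)"
    using Delta_split[of ends Y "C - Y"] by simp
qed

lemma claimB:
  assumes g: "good ends C" "k \<ge> 1" and P: "Delta ends C = int k" "\<forall>D. D \<subset> C \<longrightarrow> Delta ends D < int k"
  shows "cacti_graph ends C" "\<forall>v\<in>verts ends C. \<not> is_leaf ends C v"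
proof -
  show nl: "\<forall>v\<in>verts ends C. \<not> is_leaf ends C v"
  proof (intro ballI notI)
    fix v assume "v \<in> verts ends C" and lf: "is_leaf ends C v"
    obtain e where e: "e \<in> C" "ends e \<noteq> {v}" "v \<in> ends e" "Delta ends (C - {e}) \<ge> Delta ends C"
      by (rule leaf_remove[OF g(1) lf])
    have "C - {e} \<subset> C" using e(1) by blast
    then have "Delta ends (C - {e}) < int k" using P(2) by blast
    then show False using e(4) P(1) by simp
  qed
  have nc: "\<not> is_cycle ends Y" if Y: "is_component ends C Y" for Y
  proof
    assume cy: "is_cycle ends Y"
    note cs = comp_split[OF g(1) Y]
    have "Delta ends Y = 0" using cycle_Delta[OF good_subset[OF g(1) cs(2)] cy] .
    moreover have "Delta ends (C - Y) < int k" using P(2) cs(4) by blast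
    ultimately show False using cs(1) P(1) by simp
  qed
  show "cacti_graph ends C" using cacti_intro[OF g(1) nl nc] .
qed

lemma claimD:
  assumes g: "good ends C" "k \<ge> 1" and P: "Delta ends C = int k" "\<forall>D. D \<subset> C \<longrightarrow> Delta ends D < int k"
    and Y: "is_component ends C Y"
  shows "\<exists>Z1 Z2. Z1 \<subseteq> Y \<and> Z2 \<subseteq> Y \<and> Z1 \<noteq> Z2 \<and> is_cycle ends Z1 \<and> is_cycle ends Z2"
proof -
  note cs = comp_split[OF g(1) Y]
  have gY: "good ends Y" using good_subset[OF g(1) cs(2)] .
  have Yne: "Y \<noteq> {}" using cs(3) .
  have "Delta ends (C - Y) < int k" using P(2) cs(4) by blast
  then have pos: "Delta ends Y \<ge> 1" using cs(1) P(1) by simp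
  have "Delta ends Y \<ge> 0" using pos by simp
  then obtain Z1 where Z1: "Z1 \<subseteq> Y" "is_cycle ends Z1" using cycle_exists[OF gY Yne] by blast
  obtain e where e: "e \<in> Z1" using Z1(2) unfolding is_cycle_def connected_edges_def by blast
  have eY: "e \<in> Y" using e Z1(1) by blast
  have "Y \<noteq> {e}"
  proof
    assume "Y = {e}"
    then show False using Delta_single[OF gY eY] pos by simp
  qed
  then have ne: "Y - {e} \<noteq> {}" using eY by blast
  have "Delta ends (Y - {e}) \<ge> 0" using Delta_remove[OF gY eY] pos by linarith
  moreover have "good ends (Y - {e})" using good_subset[OF gY] by blast
  ultimately obtain Z2 where Z2: "Z2 \<subseteq> Y - {e}" "is_cycle ends Z2"
    using cycle_exists[OF _ ne] by blast
  have "Z1 \<noteq> Z2" using e Z2(1) by blast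
  moreover have "Z2 \<subseteq> Y" using Z2(1) by blast
  ultimately show ?thesis using Z1 Z2(2) by blast
qed

lemma claimE:
  assumes g: "good ends C"
    and nl: "\<forall>v\<in>verts ends C. \<not> is_leaf ends C v"
    and tc: "\<forall>Y. is_component ends C Y \<longrightarrow>
               (\<exists>Z1 Z2. Z1 \<subseteq> Y \<and> Z2 \<subseteq> Y \<and> Z1 \<noteq> Z2 \<and> is_cycle ends Z1 \<and> is_cycle ends Z2)"
  shows "cacti_graph ends C"
proof (rule cacti_intro[OF g nl])
  fix Y assume Y: "is_component ends C Y"
  show "\<not> is_cycle ends Y"
  proof
    assume cy: "is_cycle ends Y"
    have gY: "good ends Y" by (rule good_subset[OF g comp_split(2)[OF g Y]])
    have "\<exists>Z1 Z2. Z1 \<subseteq> Y \<and> Z2 \<subseteq> Y \<and> Z1 \<noteq> Z2 \<and> is_cycle ends Z1 \<and> is_cycle ends Z2"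
      by (rule tc[rule_format, OF Y])
    then obtain Z1 Z2 where Z: "Z1 \<subseteq> Y" "Z2 \<subseteq> Y" "Z1 \<noteq> Z2" "is_cycle ends Z1" "is_cycle ends Z2"
      by blast
    have "Z1 = Y" by (rule sub_cycle[OF gY Z(1) Z(4) cy])
    moreover have "Z2 = Y" by (rule sub_cycle[OF gY Z(2) Z(5) cy])
    ultimately show False using Z(3) by simp
  qed
qed

theorem mainTheorem8:
  fixes V :: "'v set" and E :: "'e set" and ends :: "'e \<Rightarrow> 'v set"
    and C :: "'e set" and k :: nat
  assumes "graph V E ends" and "C \<subseteq> E" and "k \<ge> 1"
  shows "(k_circuit V E ends k C \<longleftrightarrow> Delta ends C = int k \<and> cacti_graph ends C)
       \<and> (k_circuit V E ends k C \<longleftrightarrow> Delta ends C = int k \<and>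
            (\<forall>v\<in>verts ends C. \<not> is_leaf ends C v) \<and>
            (\<forall>Y. is_component ends C Y \<longrightarrow>
               (\<exists>Z1 Z2. Z1 \<subseteq> Y \<and> Z2 \<subseteq> Y \<and> Z1 \<noteq> Z2 \<and> is_cycle ends Z1 \<and> is_cycle ends Z2)))"
proof -
  have gE: "good ends E" using assms(1) unfolding graph_def good_def by blast
  have g: "good ends C" by (rule good_subset[OF gE assms(2)])
  note A = claimA[OF g assms(2,3), of V]
  have CP: "\<forall>D. D \<subset> C \<longrightarrow> Delta ends D < int k"
    if H: "Delta ends C = int k" "cacti_graph ends C"
  proof (intro allI impI)
    fix D assume D: "D \<subset> C"
    have nl: "\<forall>v\<in>verts ends C. \<not> is_leaf ends C v" using H(2) unfolding cacti_graph_def by blast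
    have nc: "\<forall>Y. is_component ends C Y \<longrightarrow> \<not> is_cycle ends Y" using H(2) unfolding cacti_graph_def by blast
    show "Delta ends D < int k" using strict_dec[OF g nl nc D] H(1) by simp
  qed
  let ?P = "Delta ends C = int k \<and> (\<forall>D. D \<subset> C \<longrightarrow> Delta ends D < int k)"
  let ?R2 = "Delta ends C = int k \<and>
            (\<forall>v\<in>verts ends C. \<not> is_leaf ends C v) \<and>
            (\<forall>Y. is_component ends C Y \<longrightarrow>
               (\<exists>Z1 Z2. Z1 \<subseteq> Y \<and> Z2 \<subseteq> Y \<and> Z1 \<noteq> Z2 \<and> is_cycle ends Z1 \<and> is_cycle ends Z2))"
  have e1: "?P \<longleftrightarrow> Delta ends C = int k \<and> cacti_graph ends C"
  proof
    assume P: ?P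
    have "cacti_graph ends C" by (rule claimB(1)[OF g assms(3) P[THEN conjunct1] P[THEN conjunct2]])
    then show "Delta ends C = int k \<and> cacti_graph ends C"
      using P[THEN conjunct1] by (rule conjI[rotated])
  next
    assume H: "Delta ends C = int k \<and> cacti_graph ends C"
    have "\<forall>D. D \<subset> C \<longrightarrow> Delta ends D < int k" by (rule CP[OF H[THEN conjunct1] H[THEN conjunct2]])
    then show ?P using H[THEN conjunct1] by (rule conjI[rotated])
  qed
  have e2: "?P \<longleftrightarrow> ?R2"
  proof
    assume P: ?P
    have a: "\<forall>v\<in>verts ends C. \<not> is_leaf ends C v" by (rule claimB(2)[OF g assms(3) P[THEN conjunct1] P[THEN conjunct2]])
    have b: "\<forall>Y. is_component ends C Y \<longrightarrow>
               (\<exists>Z1 Z2. Z1 \<subseteq> Y \<and> Z2 \<subseteq> Y \<and> Z1 \<noteq> Z2 \<and> is_cycle ends Z1 \<and> is_cycle ends Z2)"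
    proof (intro allI impI)
      fix Y assume "is_component ends C Y"
      then show "\<exists>Z1 Z2. Z1 \<subseteq> Y \<and> Z2 \<subseteq> Y \<and> Z1 \<noteq> Z2 \<and> is_cycle ends Z1 \<and> is_cycle ends Z2"
        by (rule claimD[OF g assms(3) P[THEN conjunct1] P[THEN conjunct2]])
    qed
    show ?R2 using P[THEN conjunct1] a b by (intro conjI)
  next
    assume R: ?R2
    have "cacti_graph ends C" by (rule claimE[OF g R[THEN conjunct2, THEN conjunct1] R[THEN conjunct2, THEN conjunct2]])
    then have "\<forall>D. D \<subset> C \<longrightarrow> Delta ends D < int k" by (rule CP[OF R[THEN conjunct1]])
    then show ?P using R[THEN conjunct1] by (rule conjI[rotated])
  qed
  have f1: "k_circuit V E ends k C \<longleftrightarrow> Delta ends C = int k \<and> cacti_graph ends C"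
    using A e1 by (rule trans)
  have f2: "k_circuit V E ends k C \<longleftrightarrow> ?R2" using A e2 by (rule trans)
  show ?thesis using f1 f2 by (rule conjI)
qed

end
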